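(* Let $G=(U,E)$ be a connected graph with $n=|U|$ vertices. Then there exists a category system $\mathcal S\subset 2^U$ such that the greedy category-based routing strategy ROUTING correctly routes messages between all pairs of vertices of $G$ and such that $\operatorname{memdim}(\mathcal S)=O\big((\operatorname{diam}(G)+\log n)^2\big)$.
   Context: A category system for a graph $G=(U,E)$ is a family $\mathcal S\subset 2^U$ of subsets of the vertex set. For $u\in U$ let $\mathrm{cat}(u)=\{C\in\mathcal S: u\in C\}$. The membership dimension is $\operatorname{memdim}(\mathcal S)=\max_{u\in U}|\mathrm{cat}(u)|$. For $s,t\in U$ define $d(s,t)=|\mathrm{cat}(t)\setminus \mathrm{cat}(s)|$. $N(u)$ denotes the set of neighbors of $u$ in $G$, and $\operatorname{diam}(G)$ is the maximum over pairs of vertices of their shortest-path distance in $G$. The strategy ROUTING is: a node $u$ holding a message for destination $w\neq u$ forwards it to a neighbor $v\in N(u)$ with $d(v,w)<d(u,w)$. ROUTING correctly routes messages between all pairs of vertices if for every ordered pair of distinct vertices $u,w$ there is a neighbor $v\in N(u)$ with $d(v,w)<d(u,w)$ (so that, since $d$ takes nonnegative integer values and strictly decreases along the route, every message from any source is delivered to its destination). *)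

theory Defs
  imports Complex_Main
begin

definition simple_graph :: "'a set \<Rightarrow> ('a \<Rightarrow> 'a \<Rightarrow> bool) \<Rightarrow> bool" where
  "simple_graph U E \<longleftrightarrow> finite U \<and> (\<forall>u v. E u v \<longrightarrow> u \<in> U \<and> v \<in> U)
     \<and> (\<forall>u v. E u v \<longrightarrow> E v u) \<and> (\<forall>u. \<not> E u u)"

fun is_walk :: "('a \<Rightarrow> 'a \<Rightarrow> bool) \<Rightarrow> 'a list \<Rightarrow> bool" where
  "is_walk E [] = True"
| "is_walk E [x] = True"
| "is_walk E (x # y # xs) = (E x y \<and> is_walk E (y # xs))"

definition walk_of_len :: "('a \<Rightarrow> 'a \<Rightarrow> bool) \<Rightarrow> nat \<Rightarrow> 'a \<Rightarrow> 'a \<Rightarrow> bool" where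
  "walk_of_len E k u v \<longleftrightarrow> (\<exists>xs. length xs = Suc k \<and> hd xs = u \<and> last xs = v \<and> is_walk E xs)"

definition connected_graph :: "'a set \<Rightarrow> ('a \<Rightarrow> 'a \<Rightarrow> bool) \<Rightarrow> bool" where
  "connected_graph U E \<longleftrightarrow> U \<noteq> {} \<and> (\<forall>u\<in>U. \<forall>v\<in>U. \<exists>k. walk_of_len E k u v)"

definition graph_dist :: "('a \<Rightarrow> 'a \<Rightarrow> bool) \<Rightarrow> 'a \<Rightarrow> 'a \<Rightarrow> nat" where
  "graph_dist E u v = (LEAST k. walk_of_len E k u v)"

definition diam :: "'a set \<Rightarrow> ('a \<Rightarrow> 'a \<Rightarrow> bool) \<Rightarrow> nat" where
  "diam U E = Max {graph_dist E u v | u v. u \<in> U \<and> v \<in> U}"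

definition cat :: "'a set set \<Rightarrow> 'a \<Rightarrow> 'a set set" where
  "cat S u = {C \<in> S. u \<in> C}"

definition memdim :: "'a set \<Rightarrow> 'a set set \<Rightarrow> nat" where
  "memdim U S = Max ((\<lambda>u. card (cat S u)) ` U)"

definition cdist :: "'a set set \<Rightarrow> 'a \<Rightarrow> 'a \<Rightarrow> nat" where
  "cdist S s t = card (cat S t - cat S s)"

definition routing_correct :: "'a set \<Rightarrow> ('a \<Rightarrow> 'a \<Rightarrow> bool) \<Rightarrow> 'a set set \<Rightarrow> bool" where
  "routing_correct U E S \<longleftrightarrow>
     (\<forall>u\<in>U. \<forall>w\<in>U. u \<noteq> w \<longrightarrow> (\<exists>v. E u v \<and> cdist S v w < cdist S u w))"

end

theory Submission
  imports Defs "HOL-Library.Discrete_Functions"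
begin


lemma is_walk_nth: "is_walk E xs \<longleftrightarrow> (\<forall>i. Suc i < length xs \<longrightarrow> E (xs!i) (xs!Suc i))"
proof (induction E xs rule: is_walk.induct)
  case (3 E x y xs)
  show ?case
  proof
    assume "is_walk E (x # y # xs)"
    then show "\<forall>i. Suc i < length (x # y # xs) \<longrightarrow> E ((x # y # xs) ! i) ((x # y # xs) ! Suc i)"
      using 3 by (auto simp: less_Suc_eq_0_disj)
  next
    assume h: "\<forall>i. Suc i < length (x # y # xs) \<longrightarrow> E ((x # y # xs) ! i) ((x # y # xs) ! Suc i)"
    have "E x y" using h[rule_format, of 0] by simp
    moreover have "is_walk E (y # xs)" using 3 h by (metis Suc_less_eq length_Cons nth_Cons_Suc)
    ultimately show "is_walk E (x # y # xs)" by simp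
  qed
qed auto

lemma walk_snoc:
  assumes "walk_of_len E k u v" "E v w"
  shows "walk_of_len E (Suc k) u w"
proof -
  obtain xs where xs: "length xs = Suc k" "hd xs = u" "last xs = v" "is_walk E xs"
    using assms(1) unfolding walk_of_len_def by blast
  let ?ys = "xs @ [w]"
  have "is_walk E ?ys" unfolding is_walk_nth
  proof (intro allI impI)
    fix i assume i: "Suc i < length ?ys"
    show "E (?ys!i) (?ys!Suc i)"
    proof (cases "Suc i < length xs")
      case True then show ?thesis using xs(4) unfolding is_walk_nth by (simp add: nth_append)
    next
      case False
      then have "i = k" using i xs(1) by simp
      have "last xs = xs ! k" using xs(1) by (metis diff_Suc_1 last_conv_nth list.size(3) nat.distinct(1))
      then show ?thesis using xs assms(2) \<open>i = k\<close>
        by (simp add: nth_append)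
    qed
  qed
  then show ?thesis unfolding walk_of_len_def using xs
    by (intro exI[of _ ?ys]) (auto simp: hd_append)
qed

lemma walk_unsnoc:
  assumes "walk_of_len E (Suc k) u w"
  shows "\<exists>p. walk_of_len E k u p \<and> E p w"
proof -
  obtain xs where xs: "length xs = Suc (Suc k)" "hd xs = u" "last xs = w" "is_walk E xs"
    using assms(1) unfolding walk_of_len_def by blast
  let ?ys = "take (Suc k) xs"
  have "is_walk E ?ys" using xs(4) unfolding is_walk_nth by auto
  moreover have "E (xs ! k) w"
  proof -
    have "last xs = xs ! Suc k" using xs(1) by (subst last_conv_nth) auto
    then show ?thesis using xs(4)[unfolded is_walk_nth, rule_format, of k] xs(1,3) by simp
  qed
  moreover have "hd ?ys = u" using xs by (simp add: hd_take)
  moreover have "last ?ys = xs ! k" using xs(1) by (subst last_conv_nth) auto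
  ultimately show ?thesis unfolding walk_of_len_def using xs(1)
    by (intro exI[of _ "xs!k"] conjI exI[of _ ?ys]) auto
qed

lemma walk_zero: "walk_of_len E 0 u v \<Longrightarrow> u = v"
  unfolding walk_of_len_def by (auto simp: length_Suc_conv)

lemma walk_refl: "walk_of_len E 0 u u"
  unfolding walk_of_len_def by (intro exI[of _ "[u]"]) auto




lemma place:
  fixes w :: "'a \<Rightarrow> nat"
  assumes "finite A"
  shows "(\<forall>c\<in>A. w c > 0) \<longrightarrow> (\<exists>s. (\<forall>c\<in>A. s c + w c \<le> sum w A) \<and>
     (\<forall>c\<in>A. \<forall>c'\<in>A. s c < s c' \<longrightarrow> s c + w c \<le> s c' \<and> w c' \<le> w c) \<and>
     (\<forall>c\<in>A. \<forall>c'\<in>A. c \<noteq> c' \<longrightarrow> s c \<noteq> s c'))"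
  using assms
proof (induction A rule: finite_ranking_induct[where f = w])
  case empty
  then show ?case by auto
next
  case (insert x S)
  show ?case
  proof
    assume pos: "\<forall>c\<in>insert x S. 0 < w c"
    show "\<exists>s. (\<forall>c\<in>insert x S. s c + w c \<le> sum w (insert x S)) \<and>
     (\<forall>c\<in>insert x S. \<forall>c'\<in>insert x S. s c < s c' \<longrightarrow> s c + w c \<le> s c' \<and> w c' \<le> w c) \<and>
     (\<forall>c\<in>insert x S. \<forall>c'\<in>insert x S. c \<noteq> c' \<longrightarrow> s c \<noteq> s c')"
    proof (cases "x \<in> S")
      case True
      then show ?thesis using insert pos by (simp add: insert_absorb)
    next
      case False
      obtain s where s: "\<forall>c\<in>S. s c + w c \<le> sum w S"
        "\<forall>c\<in>S. \<forall>c'\<in>S. s c < s c' \<longrightarrow> s c + w c \<le> s c' \<and> w c' \<le> w c"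
        "\<forall>c\<in>S. \<forall>c'\<in>S. c \<noteq> c' \<longrightarrow> s c \<noteq> s c'"
        using insert pos by auto
      define s' where "s' = (\<lambda>c. if c = x then 0 else s c + w x)"
      have wx: "w x > 0" using pos by auto
      show ?thesis
        apply (rule exI[of _ s'])
        using s wx insert(2) False insert(1)
        by (auto simp: s'_def)
    qed
  qed
qed

lemma bits_differ:
  fixes a b :: nat
  assumes "a + 2^m \<le> b" "b < 2^Suc T"
  shows "\<exists>i. m \<le> i \<and> i \<le> T \<and> bit a i \<noteq> bit b i"
proof (rule ccontr)
  assume "\<not> ?thesis"
  then have eq: "\<And>i. m \<le> i \<Longrightarrow> i \<le> T \<Longrightarrow> bit a i = bit b i" by blast
  have a_lt: "a < 2^Suc T" using assms by simp
  have hi: "\<And>i (x::nat). x < 2^Suc T \<Longrightarrow> T < i \<Longrightarrow> \<not> bit x i"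
  proof -
    fix i and x :: nat assume "x < 2^Suc T" "T < i"
    then have "x < 2^i" by (meson order_less_le_trans one_less_numeral_iff power_increasing_iff semiring_norm(76) Suc_leI)
    then show "\<not> bit x i" by (simp add: bit_iff_odd)
  qed
  have "a div 2^m = b div 2^m"
  proof (rule bit_eqI)
    fix n assume "possible_bit TYPE(nat) n"
    show "bit (a div 2^m) n = bit (b div 2^m) n"
    proof -
      have d: "\<And>x::nat. bit (x div 2^m) n = bit x (m+n)"
        by (metis bit_drop_bit_eq comp_apply drop_bit_eq_div)
      show ?thesis unfolding d
        using eq[of "m+n"] hi[OF a_lt, of "m+n"] hi[OF assms(2), of "m+n"]
        by (cases "m + n \<le> T") auto
    qed
  qed
  moreover have "a = 2^m * (a div 2^m) + a mod 2^m" by simp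
  moreover have "b = 2^m * (b div 2^m) + b mod 2^m" by simp
  moreover have "b mod 2^m < (2::nat)^m" by simp
  ultimately have "b < a + 2^m"
  proof -
    assume q: "a div 2^m = b div 2^m" "a = 2^m * (a div 2^m) + a mod 2^m"
      "b = 2^m * (b div 2^m) + b mod 2^m" "b mod 2^m < (2::nat)^m"
    define Q where "Q = 2^m * (a div 2^m)"
    have "Q \<le> a" using q(2) unfolding Q_def by linarith
    have "b < 2^m * (b div 2^m) + 2^m" using q(3,4) by linarith
    then have "b < Q + 2^m" unfolding Q_def using q(1) by metis
    moreover note \<open>Q \<le> a\<close>
    ultimately show ?thesis by linarith
  qed
  then show False using assms(1) by simp
qed




locale rt =
  fixes U :: "nat set" and E :: "nat \<Rightarrow> nat \<Rightarrow> bool" and r :: nat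
  assumes sg: "simple_graph U E" and cg: "connected_graph U E" and rU: "r \<in> U"
begin

lemma finU: "finite U" using sg unfolding simple_graph_def by auto
lemma EU: "E u v \<Longrightarrow> u \<in> U \<and> v \<in> U" using sg unfolding simple_graph_def by auto
lemma Esym: "E u v \<Longrightarrow> E v u" using sg unfolding simple_graph_def by auto

definition dep where "dep y = graph_dist E r y"

lemma dep_walk: "y \<in> U \<Longrightarrow> walk_of_len E (dep y) r y"
  unfolding dep_def graph_dist_def
  using cg rU unfolding connected_graph_def by (meson LeastI_ex)

lemma dep_le: "walk_of_len E k r y \<Longrightarrow> dep y \<le> k"
  unfolding dep_def graph_dist_def by (rule Least_le)

lemma dep0: "y \<in> U \<Longrightarrow> dep y = 0 \<Longrightarrow> y = r"
  using dep_walk walk_zero by metis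

lemma dep_r: "dep r = 0"
  using dep_le[OF walk_refl[of E r]] by simp

lemma par_ex: assumes "y \<in> U" "0 < dep y"
  shows "\<exists>p. p \<in> U \<and> E y p \<and> dep p + 1 = dep y"
proof -
  obtain k where k: "dep y = Suc k" using assms(2) by (cases "dep y") auto
  obtain p where p: "walk_of_len E k r p" "E p y" using walk_unsnoc dep_walk[OF assms(1)] k by metis
  have pU: "p \<in> U" using EU p(2) by auto
  have "dep p \<le> k" using dep_le p(1) .
  moreover have "dep y \<le> Suc (dep p)" using dep_le walk_snoc[OF dep_walk[OF pU] p(2)] by simp
  ultimately show ?thesis using pU Esym[OF p(2)] k by (intro exI[of _ p]) auto
qed

definition par where "par y = (SOME p. p \<in> U \<and> E y p \<and> dep p + 1 = dep y)"

lemma par: "y \<in> U \<Longrightarrow> 0 < dep y \<Longrightarrow> par y \<in> U \<and> E y (par y) \<and> dep (par y) + 1 = dep y"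
  unfolding par_def using someI_ex[OF par_ex] by blast

definition up where "up k y = (par ^^ k) y"

lemma up: "y \<in> U \<Longrightarrow> k \<le> dep y \<Longrightarrow> up k y \<in> U \<and> dep (up k y) = dep y - k"
proof (induction k)
  case 0 then show ?case by (simp add: up_def)
next
  case (Suc k)
  then have h: "up k y \<in> U" "dep (up k y) = dep y - k" by auto
  have "0 < dep (up k y)" using h Suc by simp
  then show ?case using par[OF h(1)] h by (simp add: up_def) arith
qed

definition ancd where "ancd d y = up (dep y - d) y"

lemma ancd: "y \<in> U \<Longrightarrow> d \<le> dep y \<Longrightarrow> ancd d y \<in> U \<and> dep (ancd d y) = d"
  unfolding ancd_def using up[of y "dep y - d"] by auto

lemma ancd_ancd: assumes "y \<in> U" "d \<le> e" "e \<le> dep y"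
  shows "ancd d (ancd e y) = ancd d y"
proof -
  have "dep (ancd e y) = e" using ancd assms by auto
  then have "ancd d (ancd e y) = up (e - d) (up (dep y - e) y)" unfolding ancd_def by simp
  also have "\<dots> = up (dep y - d) y"
  proof -
    have "dep y - d = (e - d) + (dep y - e)" using assms by simp
    then show ?thesis unfolding up_def by (simp only: funpow_add comp_apply)
  qed
  finally show ?thesis unfolding ancd_def .
qed

lemma ancd_self: "ancd (dep y) y = y" unfolding ancd_def up_def by simp

lemma ancd0: "y \<in> U \<Longrightarrow> ancd 0 y = r"
  using ancd[of y 0] dep0 by auto

lemma par_ancd: assumes "y \<in> U" "d < dep y" shows "par (ancd (Suc d) y) = ancd d y"
proof -
  have "par (ancd (Suc d) y) = par (up (dep y - Suc d) y)" unfolding ancd_def by simp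
  also have "\<dots> = up (Suc (dep y - Suc d)) y" unfolding up_def by simp
  also have "Suc (dep y - Suc d) = dep y - d" using assms by simp
  finally show ?thesis unfolding ancd_def .
qed

lemma par_eq_ancd: assumes "y \<in> U" "0 < dep y" shows "par y = ancd (dep y - 1) y"
  using par_ancd[of y "dep y - 1"] assms ancd_self[of y] by simp

definition pd where "pd x y \<longleftrightarrow> y \<in> U \<and> dep x < dep y \<and> ancd (dep x) y = x"
definition ch where "ch x y = ancd (Suc (dep x)) y"
definition sub where "sub x = {y \<in> U. dep x \<le> dep y \<and> ancd (dep x) y = x}"
definition sz where "sz x = card (sub x)"
definition kids where "kids x = {c \<in> U. dep c = Suc (dep x) \<and> par c = x}"

lemma sub_fin: "finite (sub x)" using finU unfolding sub_def by auto

lemma self_sub: "x \<in> U \<Longrightarrow> x \<in> sub x" unfolding sub_def using ancd_self by auto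

lemma sz_pos: "x \<in> U \<Longrightarrow> 0 < sz x"
  unfolding sz_def using self_sub sub_fin card_gt_0_iff by blast

lemma sz_le: "sz x \<le> card U"
  unfolding sz_def sub_def by (rule card_mono[OF finU]) auto

lemma pd_trans: "pd x y \<Longrightarrow> pd y z \<Longrightarrow> pd x z"
  unfolding pd_def using ancd_ancd[of z "dep x" "dep y"] by auto

lemma sub_mono: assumes "pd x y" shows "sub y \<subseteq> sub x"
proof
  fix z assume "z \<in> sub y"
  then have z: "z \<in> U" "dep y \<le> dep z" "ancd (dep y) z = y" unfolding sub_def by auto
  have "ancd (dep x) z = ancd (dep x) (ancd (dep y) z)"
    using ancd_ancd[of z "dep x" "dep y"] z assms unfolding pd_def by auto
  then show "z \<in> sub x" using z assms unfolding sub_def pd_def by auto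
qed

lemma sz_mono: "pd x y \<Longrightarrow> sz y \<le> sz x"
  unfolding sz_def using sub_mono sub_fin card_mono by metis

lemma kid_pd: assumes "c \<in> kids x" shows "pd x c"
proof -
  have c: "c \<in> U" "dep c = Suc (dep x)" "par c = x" using assms unfolding kids_def by auto
  have "par c = ancd (dep c - 1) c" using par_eq_ancd[OF c(1)] c(2) by simp
  then show ?thesis using c unfolding pd_def by simp
qed

lemma kids_sum: assumes "x \<in> U" shows "sum sz (kids x) < sz x"
proof -
  have fk: "finite (kids x)" using finU unfolding kids_def by auto
  have disj: "\<forall>c\<in>kids x. \<forall>c'\<in>kids x. c \<noteq> c' \<longrightarrow> sub c \<inter> sub c' = {}"
  proof (intro ballI impI)
    fix c c' assume "c \<in> kids x" "c' \<in> kids x" "c \<noteq> c'"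
    then show "sub c \<inter> sub c' = {}" unfolding kids_def sub_def by force
  qed
  have "sum sz (kids x) = card (\<Union>c\<in>kids x. sub c)"
    unfolding sz_def using card_UN_disjoint[OF fk, of sub] sub_fin disj by simp
  also have "\<dots> \<le> card (sub x - {x})"
  proof (rule card_mono)
    show "finite (sub x - {x})" using sub_fin by auto
    show "(\<Union>c\<in>kids x. sub c) \<subseteq> sub x - {x}"
    proof
      fix z assume "z \<in> (\<Union>c\<in>kids x. sub c)"
      then obtain c where c: "c \<in> kids x" and z: "z \<in> sub c" by blast
      have "z \<in> sub x" using sub_mono kid_pd c z by blast
      moreover have "z \<noteq> x" using z c unfolding sub_def kids_def by auto
      ultimately show "z \<in> sub x - {x}" by blast
    qed
  qed
  also have "\<dots> < sz x" unfolding sz_def using self_sub[OF assms] sub_fin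
    by (metis card_Diff1_less)
  finally show ?thesis .
qed

end



context rt begin

definition tt where "tt x = floor_log (sz x)"

definition sloc where "sloc x = (SOME s. (\<forall>c\<in>kids x. s c + sz c \<le> sum sz (kids x)) \<and>
     (\<forall>c\<in>kids x. \<forall>c'\<in>kids x. s c < s c' \<longrightarrow> s c + sz c \<le> s c' \<and> sz c' \<le> sz c) \<and>
     (\<forall>c\<in>kids x. \<forall>c'\<in>kids x. c \<noteq> c' \<longrightarrow> s c \<noteq> s c'))"

definition spos where "spos c = sloc (par c) c"

lemma kids_fin: "finite (kids x)" using finU unfolding kids_def by auto

lemma sloc: "(\<forall>c\<in>kids x. sloc x c + sz c \<le> sum sz (kids x)) \<and>
     (\<forall>c\<in>kids x. \<forall>c'\<in>kids x. sloc x c < sloc x c' \<longrightarrow> sloc x c + sz c \<le> sloc x c' \<and> sz c' \<le> sz c) \<and>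
     (\<forall>c\<in>kids x. \<forall>c'\<in>kids x. c \<noteq> c' \<longrightarrow> sloc x c \<noteq> sloc x c')"
proof -
  have "\<forall>c\<in>kids x. sz c > 0" using sz_pos unfolding kids_def by auto
  then have "\<exists>s. (\<forall>c\<in>kids x. s c + sz c \<le> sum sz (kids x)) \<and>
     (\<forall>c\<in>kids x. \<forall>c'\<in>kids x. s c < s c' \<longrightarrow> s c + sz c \<le> s c' \<and> sz c' \<le> sz c) \<and>
     (\<forall>c\<in>kids x. \<forall>c'\<in>kids x. c \<noteq> c' \<longrightarrow> s c \<noteq> s c')"
    using place[of "kids x" sz] kids_fin by blast
  then show ?thesis unfolding sloc_def by (rule someI_ex)
qed

lemma spos_eq: "c \<in> kids x \<Longrightarrow> spos c = sloc x c"
  unfolding spos_def kids_def by auto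

lemma tt_mono: "pd x y \<Longrightarrow> tt y \<le> tt x"
  unfolding tt_def using sz_mono floor_log_le_iff by blast

lemma tt_le: "tt x \<le> floor_log (card U)"
  unfolding tt_def using sz_le floor_log_le_iff by blast

lemma kids_bits:
  assumes x: "x \<in> U" and c: "c \<in> kids x" and c': "c' \<in> kids x" and ne: "c \<noteq> c'"
  shows "\<exists>i. tt c \<le> i \<and> tt c' \<le> i \<and> i \<le> tt x \<and> bit (spos c) i \<noteq> bit (spos c') i"
proof -
  have gen: "\<exists>i. tt c1 \<le> i \<and> tt c2 \<le> i \<and> i \<le> tt x \<and> bit (spos c1) i \<noteq> bit (spos c2) i"
    if c1: "c1 \<in> kids x" and c2: "c2 \<in> kids x" and lt: "spos c1 < spos c2" for c1 c2
  proof -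
    have s1: "spos c1 = sloc x c1" "spos c2 = sloc x c2" using spos_eq c1 c2 by auto
    have h: "spos c1 + sz c1 \<le> spos c2" "sz c2 \<le> sz c1"
      using sloc[of x] c1 c2 lt unfolding s1 by auto
    have t21: "tt c2 \<le> tt c1" unfolding tt_def using h(2) floor_log_le_iff by blast
    have c1U: "c1 \<in> U" using c1 unfolding kids_def by auto
    have "2 ^ tt c1 \<le> sz c1" unfolding tt_def using floor_log_exp2_le sz_pos[OF c1U] by blast
    then have a: "spos c1 + 2 ^ tt c1 \<le> spos c2" using h(1) by linarith
    have "spos c2 + sz c2 \<le> sum sz (kids x)" using sloc[of x] c2 unfolding s1 by auto
    then have "spos c2 < sz x" using kids_sum[OF x] by linarith
    also have "sz x < 2 ^ Suc (tt x)" unfolding tt_def using floor_log_exp2_gt by simp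
    finally obtain i where "tt c1 \<le> i" "i \<le> tt x" "bit (spos c1) i \<noteq> bit (spos c2) i"
      using bits_differ[OF a] by blast
    then show ?thesis using t21 by (intro exI[of _ i]) auto
  qed
  have "spos c \<noteq> spos c'" using sloc[of x] c c' ne spos_eq by metis
  then consider "spos c < spos c'" | "spos c' < spos c" by linarith
  then show ?thesis
  proof cases
    case 1 then show ?thesis using gen[OF c c'] by blast
  next
    case 2 then show ?thesis using gen[OF c' c] by metis
  qed
qed

lemma ch_props: assumes "pd x y"
  shows "ch x y \<in> kids x \<and> pd x (ch x y) \<and> (ch x y = y \<or> pd (ch x y) y)"
proof -
  have y: "y \<in> U" "dep x < dep y" "ancd (dep x) y = x" using assms unfolding pd_def by auto
  have a: "ch x y \<in> U" "dep (ch x y) = Suc (dep x)" unfolding ch_def using ancd[of y "Suc (dep x)"] y by auto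
  have p: "par (ch x y) = x" unfolding ch_def using par_ancd[of y "dep x"] y by simp
  have k: "ch x y \<in> kids x" unfolding kids_def using a p by auto
  have "ancd (Suc (dep x)) y = ch x y" unfolding ch_def ..
  then have "ch x y = y \<or> pd (ch x y) y" unfolding pd_def using a y
    by (metis ancd_self le_neq_implies_less Suc_leI)
  then show ?thesis using k kid_pd by blast
qed

lemma ch_trans: assumes "pd x y" "pd y z" shows "ch x z = ch x y"
proof -
  have y: "y \<in> U" "dep x < dep y" "ancd (dep x) y = x" using assms(1) unfolding pd_def by auto
  have z: "z \<in> U" "dep y < dep z" "ancd (dep y) z = y" using assms(2) unfolding pd_def by auto
  have "ancd (Suc (dep x)) (ancd (dep y) z) = ancd (Suc (dep x)) z"
    using ancd_ancd[of z "Suc (dep x)" "dep y"] y z by simp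
  then show ?thesis unfolding ch_def using z(3) by simp
qed

lemma ch_self: assumes "pd x y" shows "ch x (ch x y) = ch x y"
proof -
  have y: "y \<in> U" "dep x < dep y" using assms unfolding pd_def by auto
  show ?thesis unfolding ch_def using ancd_ancd[of y "Suc (dep x)" "Suc (dep x)"] y by simp
qed

end



context rt begin

definition J where "J x i b j = {x} \<union> {y. pd x y \<and> tt (ch x y) \<le> i \<and> i \<le> tt x \<and>
   (bit (spos (ch x y)) i = b \<or> dep y \<le> j)}"

definition LL where "LL = floor_log (card U)"
definition HH where "HH = diam U E"

definition Idx where "Idx = U \<times> {..LL} \<times> (UNIV :: bool set) \<times> {..HH}"

definition SS where "SS = (\<lambda>(x,i,b,j). J x i b j) ` Idx \<union> (\<lambda>y. {y}) ` U"

lemma dep_le_HH: "y \<in> U \<Longrightarrow> dep y \<le> HH"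
proof -
  assume y: "y \<in> U"
  have "finite {graph_dist E u v | u v. u \<in> U \<and> v \<in> U}"
  proof -
    have "{graph_dist E u v | u v. u \<in> U \<and> v \<in> U} = (\<lambda>(u,v). graph_dist E u v) ` (U \<times> U)" by auto
    then show ?thesis using finU by simp
  qed
  moreover have "dep y \<in> {graph_dist E u v | u v. u \<in> U \<and> v \<in> U}" unfolding dep_def using y rU by auto
  ultimately show ?thesis unfolding HH_def diam_def by (rule Max_ge)
qed

lemma J_sub: "x \<in> U \<Longrightarrow> J x i b j \<subseteq> U" unfolding J_def pd_def by auto

lemma SS_sub: "SS \<subseteq> Pow U" unfolding SS_def Idx_def using J_sub by fastforce

lemma SS_fin: "finite SS" unfolding SS_def Idx_def using finU by auto

lemma memJ: "y \<in> J x i b j \<longleftrightarrow> y = x \<or> (pd x y \<and> tt (ch x y) \<le> i \<and> i \<le> tt x \<and>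
   (bit (spos (ch x y)) i = b \<or> dep y \<le> j))" unfolding J_def by auto

lemma JinSS: "x \<in> U \<Longrightarrow> i \<le> tt x \<Longrightarrow> j \<le> HH \<Longrightarrow> J x i b j \<in> SS"
  unfolding SS_def Idx_def using tt_le[of x] unfolding LL_def[symmetric]
  by (auto intro!: image_eqI[of _ _ "(x,i,b,j)"])

lemma pd_irrefl: "pd x y \<Longrightarrow> \<not> pd y x" unfolding pd_def by auto
lemma pd_neq: "pd x y \<Longrightarrow> x \<noteq> y" unfolding pd_def by auto

lemma r_pd: assumes "w \<in> U" "w \<noteq> r" shows "pd r w"
proof -
  have "dep w \<noteq> 0" using dep0 assms by auto
  then show ?thesis unfolding pd_def using assms dep_r ancd0 by auto
qed

lemma step_ok:
  assumes u: "u \<in> U" and w: "w \<in> U" and uw: "u \<noteq> w"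
  shows "\<exists>v. E u v \<and> (\<forall>C\<in>SS. w \<in> C \<and> u \<in> C \<longrightarrow> v \<in> C) \<and> (\<exists>C\<in>SS. w \<in> C \<and> v \<in> C \<and> u \<notin> C)"
proof (cases "pd u w")
  case True
  define v where "v = ch u w"
  have cp: "v \<in> kids u" "pd u v" "v = w \<or> pd v w" using ch_props[OF True] unfolding v_def by auto
  have Euv: "E u v" using cp(1) par[of v] Esym unfolding kids_def by auto
  have depv: "dep v \<le> dep w" using cp(3) unfolding pd_def by auto
  have incl: "\<forall>C\<in>SS. w \<in> C \<and> u \<in> C \<longrightarrow> v \<in> C"
  proof (intro ballI impI)
    fix C assume C: "C \<in> SS" "w \<in> C \<and> u \<in> C"
    show "v \<in> C"
    proof (cases "C \<in> (\<lambda>y. {y}) ` U")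
      case True then show ?thesis using C uw by auto
    next
      case False
      then obtain x i b j where Cx: "C = J x i b j" using C(1) unfolding SS_def by auto
      have wx: "w \<noteq> x"
      proof
        assume "w = x"
        then have "u = x \<or> pd x u" using C(2) unfolding Cx memJ by auto
        then show False using True \<open>w = x\<close> uw pd_irrefl by auto
      qed
      then have wc: "pd x w" "tt (ch x w) \<le> i" "i \<le> tt x" "bit (spos (ch x w)) i = b \<or> dep w \<le> j"
        using C(2) unfolding Cx memJ by auto
      have "pd x v \<and> ch x v = ch x w"
      proof (cases "u = x")
        case True then show ?thesis using cp(2) ch_self \<open>pd u w\<close> unfolding v_def by auto
      next
        case False
        then have "pd x u" using C(2) unfolding Cx memJ by auto
        then show ?thesis using pd_trans cp(2) ch_trans \<open>pd u w\<close> by metis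
      qed
      then show ?thesis unfolding Cx memJ using wc depv by auto
    qed
  qed
  have strict: "\<exists>C\<in>SS. w \<in> C \<and> v \<in> C \<and> u \<notin> C"
  proof (cases "v = w")
    case True
    then show ?thesis using w uw unfolding SS_def by auto
  next
    case False
    then have pvw: "pd v w" using cp(3) by auto
    define i0 where "i0 = tt (ch v w)"
    have vU: "v \<in> U" using cp(2) unfolding pd_def by auto
    have i0: "i0 \<le> tt v" unfolding i0_def using tt_mono ch_props[OF pvw] by blast
    have "J v i0 (bit (spos (ch v w)) i0) 0 \<in> SS" using JinSS[OF vU i0] by simp
    moreover have "w \<in> J v i0 (bit (spos (ch v w)) i0) 0" unfolding memJ using pvw i0 i0_def by auto
    moreover have "v \<in> J v i0 (bit (spos (ch v w)) i0) 0" unfolding memJ by simp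
    moreover have "u \<notin> J v i0 (bit (spos (ch v w)) i0) 0" unfolding memJ
      using cp(2) pd_irrefl pd_neq by blast
    ultimately show ?thesis by blast
  qed
  show ?thesis using Euv incl strict by blast
next
  case False
  have ur: "u \<noteq> r" using r_pd[OF w] False uw by auto
  have du: "0 < dep u" using dep0[OF u] ur by (cases "dep u") auto
  define v where "v = par u"
  have pv: "v \<in> U" "E u v" "dep v + 1 = dep u" using par[OF u du] unfolding v_def by auto
  have dvu: "dep v = dep u - 1" using pv(3) by simp
  have v_anc: "v = ancd (dep v) u" unfolding dvu unfolding v_def using par_eq_ancd[OF u du] .
  have pvu: "pd v u" unfolding pd_def using u pv(3) v_anc by auto
  have incl: "\<forall>C\<in>SS. w \<in> C \<and> u \<in> C \<longrightarrow> v \<in> C"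
  proof (intro ballI impI)
    fix C assume C: "C \<in> SS" "w \<in> C \<and> u \<in> C"
    show "v \<in> C"
    proof (cases "C \<in> (\<lambda>y. {y}) ` U")
      case True then show ?thesis using C uw by auto
    next
      case False
      then obtain x i b j where Cx: "C = J x i b j" using C(1) unfolding SS_def by auto
      have ux: "u \<noteq> x"
      proof
        assume "u = x"
        then have "pd u w" using C(2) uw unfolding Cx memJ by auto
        then show False using \<open>\<not> pd u w\<close> by simp
      qed
      then have uc: "pd x u" "tt (ch x u) \<le> i" "i \<le> tt x" "bit (spos (ch x u)) i = b \<or> dep u \<le> j"
        using C(2) unfolding Cx memJ by auto
      show ?thesis
      proof (cases "v = x")
        case True then show ?thesis unfolding Cx memJ by simp
      next
        case False
        have xu: "u \<in> U" "dep x < dep u" "ancd (dep x) u = x" using uc(1) unfolding pd_def by auto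
        have "dep x \<noteq> dep v" using False v_anc xu by auto
        then have dxv: "dep x < dep v" using xu pv(3) by linarith
        have "ancd (dep x) v = x" using v_anc ancd_ancd[of u "dep x" "dep v"] xu dxv pv(3) by simp
        then have pxv: "pd x v" unfolding pd_def using dxv pv(1) by simp
        have "ch x u = ch x v" using ch_trans[OF pxv pvu] .
        then show ?thesis unfolding Cx memJ using pxv uc pv(3) by auto
      qed
    qed
  qed
  define P where "P = (\<lambda>d. d \<le> min (dep u) (dep w) \<and> ancd d u = ancd d w)"
  have P0: "P 0" unfolding P_def using ancd0 u w by simp
  have Pb: "\<And>d. P d \<Longrightarrow> d \<le> dep u" unfolding P_def by auto
  define d where "d = (GREATEST d. P d)"
  have Pd: "P d" unfolding d_def using GreatestI_nat[of P 0 "dep u"] P0 Pb by blast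
  have dmax: "\<And>e. P e \<Longrightarrow> e \<le> d" unfolding d_def using Greatest_le_nat[of P _ "dep u"] Pb by blast
  have dlu: "d < dep u"
  proof (rule ccontr)
    assume "\<not> d < dep u"
    then have dd: "d = dep u" "dep u \<le> dep w" using Pd unfolding P_def by auto
    then have "u = ancd (dep u) w" using Pd ancd_self[of u] unfolding P_def by simp
    then show False using False uw dd ancd_self[of w] unfolding pd_def
      using w le_neq_implies_less by metis
  qed
  define a where "a = ancd d u"
  have aw: "a = ancd d w" using Pd unfolding P_def a_def by simp
  have aU: "a \<in> U" "dep a = d" using ancd[of u d] u dlu unfolding a_def by auto
  have dv: "d \<le> dep v" using dlu pv(3) by linarith
  have v_a: "v = a \<or> pd a v"
  proof (cases "d = dep v")
    case True then show ?thesis using v_anc a_def by simp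
  next
    case False
    then have "d < dep v" using dv by simp
    moreover have "ancd d v = a" using v_anc ancd_ancd[of u d "dep v"] u dv pv(3) a_def by simp
    ultimately show ?thesis unfolding pd_def using pv(1) aU by simp
  qed
  have pau: "pd a u" unfolding pd_def using u dlu aU a_def by simp
  have chv: "v \<noteq> a \<Longrightarrow> ch a v = ch a u" using v_a ch_trans pvu by metis
  have strict: "\<exists>C\<in>SS. w \<in> C \<and> v \<in> C \<and> u \<notin> C"
  proof (cases "d = dep w")
    case True
    then have aw': "a = w" using aw ancd_self[of w] by simp
    define cu where "cu = ch w u"
    define i0 where "i0 = tt cu"
    define C where "C = J w i0 (\<not> bit (spos cu) i0) (dep v)"
    have pwu: "pd w u" using pau aw' by simp
    have i0: "i0 \<le> tt w" unfolding i0_def cu_def using tt_mono ch_props[OF pwu] by blast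
    have "C \<in> SS" unfolding C_def using JinSS[OF w i0] dep_le_HH[OF pv(1)] by simp
    moreover have "w \<in> C" unfolding C_def memJ by simp
    moreover have "v \<in> C"
    proof (cases "v = w")
      case True then show ?thesis unfolding C_def memJ by simp
    next
      case False
      then show ?thesis unfolding C_def memJ using v_a aw' chv i0 unfolding i0_def cu_def by auto
    qed
    moreover have "u \<notin> C" unfolding C_def memJ using uw pv(3) unfolding cu_def by auto
    ultimately show ?thesis by blast
  next
    case False
    then have dlw: "d < dep w" using Pd unfolding P_def by auto
    define cu where "cu = ancd (Suc d) u"
    define cw where "cw = ancd (Suc d) w"
    have "cu \<noteq> cw"
    proof
      assume "cu = cw"
      then have "P (Suc d)" unfolding P_def cu_def cw_def using dlu dlw by auto
      then show False using dmax by fastforce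
    qed
    have pawa: "pd a w" unfolding pd_def using w dlw aU aw by simp
    have chu: "ch a u = cu" unfolding ch_def cu_def using aU by simp
    have chw: "ch a w = cw" unfolding ch_def cw_def using aU by simp
    have cuk: "cu \<in> kids a" using ch_props[OF pau] chu by simp
    have cwk: "cw \<in> kids a" using ch_props[OF pawa] chw by simp
    obtain i where i: "tt cu \<le> i" "tt cw \<le> i" "i \<le> tt a" "bit (spos cu) i \<noteq> bit (spos cw) i"
      using kids_bits[OF aU(1) cuk cwk \<open>cu \<noteq> cw\<close>] by blast
    define C where "C = J a i (bit (spos cw) i) (dep v)"
    have "C \<in> SS" unfolding C_def using JinSS[OF aU(1) i(3)] dep_le_HH[OF pv(1)] by simp
    moreover have "w \<in> C" unfolding C_def memJ using pawa chw i by simp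
    moreover have "v \<in> C"
    proof (cases "v = a")
      case True then show ?thesis unfolding C_def memJ by simp
    next
      case False
      then show ?thesis unfolding C_def memJ using v_a chv chu i by auto
    qed
    moreover have "u \<notin> C" unfolding C_def memJ using pau pd_neq chu i pv(3) by auto
    ultimately show ?thesis by blast
  qed
  show ?thesis using pv(2) incl strict by blast
qed

lemma routing: "routing_correct U E SS"
  unfolding routing_correct_def
proof (intro ballI impI)
  fix u w assume u: "u \<in> U" and w: "w \<in> U" and uw: "u \<noteq> w"
  obtain v where v: "E u v" "\<forall>C\<in>SS. w \<in> C \<and> u \<in> C \<longrightarrow> v \<in> C" "\<exists>C\<in>SS. w \<in> C \<and> v \<in> C \<and> u \<notin> C"
    using step_ok[OF u w uw] by blast
  have "cat SS w - cat SS v \<subset> cat SS w - cat SS u"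
    using v(2,3) unfolding cat_def by blast
  moreover have "finite (cat SS w - cat SS u)" using SS_fin unfolding cat_def by auto
  ultimately have "cdist SS v w < cdist SS u w" unfolding cdist_def by (rule psubset_card_mono[rotated])
  then show "\<exists>v. E u v \<and> cdist SS v w < cdist SS u w" using v(1) by blast
qed

end



context rt begin

lemma anc_step: assumes "v \<in> U" "k < dep v" shows "tt (ancd (Suc k) v) \<le> tt (ancd k v)"
proof -
  have a: "ancd (Suc k) v \<in> U" "dep (ancd (Suc k) v) = Suc k" using ancd[of v "Suc k"] assms by auto
  have b: "dep (ancd k v) = k" using ancd[of v k] assms by auto
  have "ancd k (ancd (Suc k) v) = ancd k v" using ancd_ancd[of v k "Suc k"] assms by simp
  then have "pd (ancd k v) (ancd (Suc k) v)" unfolding pd_def using a b by simp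
  then show ?thesis by (rule tt_mono)
qed

lemma tele: assumes "v \<in> U" shows "n \<le> dep v \<Longrightarrow>
  (\<Sum>k<n. tt (ancd k v) + 1 - tt (ancd (Suc k) v)) + tt (ancd n v) \<le> tt (ancd 0 v) + n"
proof (induction n)
  case 0 then show ?case by simp
next
  case (Suc n)
  have "tt (ancd (Suc n) v) \<le> tt (ancd n v)" using anc_step[OF assms, of n] Suc by simp
  then show ?case using Suc by simp
qed

lemma cat_bound: assumes v: "v \<in> U"
  shows "card (cat SS v) \<le> 1 + 2*(LL+1)*(HH+1) + 2*(HH+1)*(LL+HH)"
proof -
  define A where "A = {q \<in> Idx. v \<in> (case q of (x,i,b,j) \<Rightarrow> J x i b j)}"
  define B1 where "B1 = {v} \<times> {..LL} \<times> (UNIV :: bool set) \<times> {..HH}"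
  define f where "f = (\<lambda>k. tt (ancd k v) + 1 - tt (ancd (Suc k) v))"
  define B2 where "B2 = (\<Union>k<dep v. {ancd k v} \<times> {tt (ancd (Suc k) v)..tt (ancd k v)} \<times> (UNIV :: bool set) \<times> {..HH})"
  have "cat SS v \<subseteq> (\<lambda>(x,i,b,j). J x i b j) ` A \<union> {{v}}"
    unfolding cat_def SS_def A_def by auto
  then have "card (cat SS v) \<le> card ((\<lambda>(x,i,b,j). J x i b j) ` A \<union> {{v}})"
    by (rule card_mono[rotated]) (auto simp: A_def Idx_def finU)
  also have "\<dots> \<le> card ((\<lambda>(x,i,b,j). J x i b j) ` A) + 1"
    using card_Un_le[of _ "{{v}}"] by simp
  also have "card ((\<lambda>(x,i,b,j). J x i b j) ` A) \<le> card A"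
    by (rule card_image_le) (auto simp: A_def Idx_def finU)
  also have "A \<subseteq> B1 \<union> B2"
  proof
    fix q assume q: "q \<in> A"
    obtain x i b j where qq: "q = (x,i,b,j)" by (cases q) auto
    have mem: "v \<in> J x i b j" "x \<in> U" "i \<le> LL" "j \<le> HH" using q unfolding A_def Idx_def qq by auto
    show "q \<in> B1 \<union> B2"
    proof (cases "x = v")
      case True then show ?thesis unfolding qq B1_def using mem by auto
    next
      case False
      then have c: "pd x v" "tt (ch x v) \<le> i" "i \<le> tt x" using mem(1) unfolding memJ by auto
      have k: "dep x < dep v" "ancd (dep x) v = x" using c(1) unfolding pd_def by auto
      show ?thesis unfolding B2_def qq using k c mem(4) unfolding ch_def
        by (intro UnI2 UN_I[of "dep x"]) auto
    qed
  qed
  then have "card A \<le> card (B1 \<union> B2)"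
    by (rule card_mono[rotated]) (auto simp: B1_def B2_def)
  also have "\<dots> \<le> card B1 + card B2" by (rule card_Un_le)
  finally have cA: "card (cat SS v) \<le> card B1 + card B2 + 1" by simp
  have cB1: "card B1 = (LL+1)*(2*(HH+1))" unfolding B1_def by (simp add: card_cartesian_product)
  have "card B2 \<le> (\<Sum>k<dep v. f k * (2*(HH+1)))"
    unfolding B2_def f_def
    by (rule order_trans[OF card_UN_le]) (auto simp: card_cartesian_product)
  also have "(\<Sum>k<dep v. f k * (2*(HH+1))) = (\<Sum>k<dep v. f k) * (2*(HH+1))"
    by (rule sum_distrib_right[symmetric])
  finally have b2: "card B2 \<le> (\<Sum>k<dep v. f k) * (2*(HH+1))" .
  have sf: "(\<Sum>k<dep v. f k) \<le> LL + HH"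
  proof -
    have "(\<Sum>k<dep v. f k) \<le> tt (ancd 0 v) + dep v" using tele[OF v, of "dep v"] unfolding f_def by simp
    also have "\<dots> \<le> LL + HH" using tt_le dep_le_HH[OF v] unfolding LL_def by (meson add_le_mono)
    finally show ?thesis .
  qed
  have cB2: "card B2 \<le> (LL + HH) * (2*(HH+1))"
    using b2 mult_right_mono[OF sf, of "2*(HH+1)"] by linarith
  show ?thesis using cA cB1 cB2 by (simp add: algebra_simps)
qed

end



lemma ln2_half: "1/2 \<le> ln (2::real)"
proof -
  have "ln (1/2::real) \<le> 1/2 - 1" by (rule ln_le_minus_one) auto
  moreover have "ln (1/2::real) = - ln 2" by (simp add: ln_div)
  ultimately show ?thesis by simp
qed

lemma final_ineq:
  fixes h l L :: real
  assumes "1 \<le> h" "0 \<le> l" "l \<le> 2 * L"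
  shows "1 + 2*(l+1)*(h+1) + 2*(h+1)*(l+h) \<le> 36 * (h + L)^2"
proof -
  have "1 + 2*(l+1)*(h+1) + 2*(h+1)*(l+h) = 3 + 4*l*h + 4*l + 4*h + 2*h^2"
    by (simp add: algebra_simps power2_eq_square)
  also have "\<dots> \<le> 9 * h^2 + 8 * h * l"
  proof -
    have "1 \<le> h * h" using assms(1) mult_mono[of 1 h 1 h] by simp
    then have "3 \<le> 3 * h^2" by (simp add: power2_eq_square)
    moreover have "4 * h \<le> 4 * h^2" using assms(1) by (simp add: power2_eq_square)
    moreover have "4 * l \<le> 4 * h * l" using assms(1,2) by (simp add: mult_right_mono)
    ultimately show ?thesis by (simp add: algebra_simps)
  qed
  also have "\<dots> \<le> 9 * (h + l)^2" using assms by (simp add: power2_eq_square algebra_simps)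
  also have "\<dots> \<le> 9 * (2 * (h + L))^2"
    using assms by (intro mult_left_mono power_mono) auto
  also have "\<dots> = 36 * (h + L)^2" by (simp add: power2_eq_square algebra_simps)
  finally show ?thesis .
qed

theorem theorem2:
  shows "\<exists>c::real. c > 0 \<and>
    (\<forall>(U :: nat set) (E :: nat \<Rightarrow> nat \<Rightarrow> bool).
       simple_graph U E \<and> connected_graph U E \<longrightarrow>
       (\<exists>S. S \<subseteq> Pow U \<and> routing_correct U E S \<and>
            real (memdim U S) \<le> c * (real (diam U E) + ln (real (card U)))^2))"
proof (intro exI[of _ 36] conjI allI impI)
  show "(0::real) < 36" by simp
next
  fix U :: "nat set" and E :: "nat \<Rightarrow> nat \<Rightarrow> bool"
  assume G: "simple_graph U E \<and> connected_graph U E"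
  have finU: "finite U" using G unfolding simple_graph_def by auto
  have neU: "U \<noteq> {}" using G unfolding connected_graph_def by auto
  obtain r where rU: "r \<in> U" using neU by auto
  interpret rt U E r using G rU by unfold_locales auto
  show "\<exists>S. S \<subseteq> Pow U \<and> routing_correct U E S \<and>
            real (memdim U S) \<le> 36 * (real (diam U E) + ln (real (card U)))^2"
  proof (cases "U = {r}")
    case True
    have "routing_correct U E {}" unfolding routing_correct_def True by auto
    moreover have "memdim U {} = 0" unfolding memdim_def cat_def True by simp
    ultimately show ?thesis by auto
  next
    case False
    then obtain y where y: "y \<in> U" "y \<noteq> r" using rU by auto
    have h1: "1 \<le> HH" using dep_le_HH[OF y(1)] dep0[OF y(1)] y(2) by fastforce
    have cardpos: "0 < card U" using finU neU by (simp add: card_gt_0_iff)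
    have "2 ^ LL \<le> card U" unfolding LL_def using floor_log_exp2_le[OF cardpos] .
    then have "real (2 ^ LL) \<le> real (card U)" by linarith
    then have "ln (real (2 ^ LL)) \<le> ln (real (card U))" using cardpos by simp
    then have "real LL * ln 2 \<le> ln (real (card U))" by (simp add: ln_realpow)
    moreover have "real LL * (1/2) \<le> real LL * ln 2" using ln2_half by (intro mult_left_mono) auto
    ultimately have lL: "real LL \<le> 2 * ln (real (card U))" by linarith
    have md: "memdim U SS \<le> 1 + 2*(LL+1)*(HH+1) + 2*(HH+1)*(LL+HH)"
      unfolding memdim_def using cat_bound finU neU by (subst Max_le_iff) auto
    have "real (memdim U SS) \<le> real (1 + 2*(LL+1)*(HH+1) + 2*(HH+1)*(LL+HH))"
      using md by linarith
    also have "\<dots> = 1 + 2*(real LL+1)*(real HH+1) + 2*(real HH+1)*(real LL+real HH)" by (simp add: algebra_simps)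
    also have "\<dots> \<le> 36 * (real HH + ln (real (card U)))^2"
      by (rule final_ineq) (use h1 lL in auto)
    finally show ?thesis using SS_sub routing unfolding HH_def by blast
  qed
qed


end
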